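(* Let $k\ge 2$ and let $G$ and $H$ be $\Gamma_{\times k,t}$-external graphs with $\delta(G)\ge k$ and $\delta(H)\ge k$. Then \[ \Gamma_{\times k,t}(G\,\Box\,H)\ge\max\{\Gamma_{\times k,t}(G)\cdot|V(H)|,\ \Gamma_{\times k,t}(H)\cdot|V(G)|\}. \]
   Context: A set $S\subseteq V(G)$ is a $k$-tuple total dominating set ($k$TDS) of a graph $G$ with $\delta(G)\ge k$ if $|N_G(x)\cap S|\ge k$ for every $x\in V(G)$. The upper $k$-tuple total domination number $\Gamma_{\times k,t}(G)$ is the maximum cardinality of a minimal (with respect to inclusion) $k$TDS of $G$; a minimal $k$TDS of this cardinality is a $\Gamma_{\times k,t}$-set. For $v\in S$, a vertex $v'$ is a $k$-open private neighbor of $v$ with respect to $S$ if $v\in N_G(v')$ and $|N_G(v')\cap S|=k$; it is external if $v'\notin S$. A graph $G$ is $\Gamma_{\times k,t}$-external if it has a $\Gamma_{\times k,t}$-set $S$ such that every vertex of $S$ has an external $k$-open private neighbor with respect to $S$. The Cartesian product $G\,\Box\,H$ has vertex set $V(G)\times V(H)$, with $(g_1,h_1)\sim(g_2,h_2)$ iff either $g_1=g_2$ and $h_1h_2\in E(H)$, or $h_1=h_2$ and $g_1g_2\in E(G)$. *)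

theory Defs
  imports Main
begin

definition graph :: "'a set \<Rightarrow> ('a \<Rightarrow> 'a \<Rightarrow> bool) \<Rightarrow> bool" where
  "graph V E \<longleftrightarrow> finite V \<and> V \<noteq> {} \<and>
     (\<forall>x y. E x y \<longrightarrow> x \<in> V \<and> y \<in> V) \<and>
     (\<forall>x y. E x y \<longrightarrow> E y x) \<and> (\<forall>x. \<not> E x x)"

definition nbhd :: "'a set \<Rightarrow> ('a \<Rightarrow> 'a \<Rightarrow> bool) \<Rightarrow> 'a \<Rightarrow> 'a set" where
  "nbhd V E x = {y \<in> V. E x y}"

definition min_deg_ge :: "'a set \<Rightarrow> ('a \<Rightarrow> 'a \<Rightarrow> bool) \<Rightarrow> nat \<Rightarrow> bool" where
  "min_deg_ge V E k \<longleftrightarrow> (\<forall>x\<in>V. card (nbhd V E x) \<ge> k)"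

definition kTDS :: "'a set \<Rightarrow> ('a \<Rightarrow> 'a \<Rightarrow> bool) \<Rightarrow> nat \<Rightarrow> 'a set \<Rightarrow> bool" where
  "kTDS V E k S \<longleftrightarrow> S \<subseteq> V \<and> (\<forall>x\<in>V. card (nbhd V E x \<inter> S) \<ge> k)"

definition minimal_kTDS :: "'a set \<Rightarrow> ('a \<Rightarrow> 'a \<Rightarrow> bool) \<Rightarrow> nat \<Rightarrow> 'a set \<Rightarrow> bool" where
  "minimal_kTDS V E k S \<longleftrightarrow> kTDS V E k S \<and> (\<forall>T. T \<subset> S \<longrightarrow> \<not> kTDS V E k T)"

definition upper_ktdn :: "'a set \<Rightarrow> ('a \<Rightarrow> 'a \<Rightarrow> bool) \<Rightarrow> nat \<Rightarrow> nat" where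
  "upper_ktdn V E k = Max (card ` {S. minimal_kTDS V E k S})"

definition Gamma_set :: "'a set \<Rightarrow> ('a \<Rightarrow> 'a \<Rightarrow> bool) \<Rightarrow> nat \<Rightarrow> 'a set \<Rightarrow> bool" where
  "Gamma_set V E k S \<longleftrightarrow> minimal_kTDS V E k S \<and> card S = upper_ktdn V E k"

definition k_open_pn :: "'a set \<Rightarrow> ('a \<Rightarrow> 'a \<Rightarrow> bool) \<Rightarrow> nat \<Rightarrow> 'a set \<Rightarrow> 'a \<Rightarrow> 'a \<Rightarrow> bool" where
  "k_open_pn V E k S v v' \<longleftrightarrow> v' \<in> V \<and> v \<in> nbhd V E v' \<and> card (nbhd V E v' \<inter> S) = k"

definition Gamma_external :: "'a set \<Rightarrow> ('a \<Rightarrow> 'a \<Rightarrow> bool) \<Rightarrow> nat \<Rightarrow> bool" where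
  "Gamma_external V E k \<longleftrightarrow> (\<exists>S. Gamma_set V E k S \<and>
      (\<forall>v\<in>S. \<exists>v'. k_open_pn V E k S v v' \<and> v' \<notin> S))"

definition cart_edges :: "('a \<Rightarrow> 'a \<Rightarrow> bool) \<Rightarrow> ('b \<Rightarrow> 'b \<Rightarrow> bool) \<Rightarrow> 'a \<times> 'b \<Rightarrow> 'a \<times> 'b \<Rightarrow> bool" where
  "cart_edges EG EH p q \<longleftrightarrow>
     (fst p = fst q \<and> EH (snd p) (snd q)) \<or> (snd p = snd q \<and> EG (fst p) (fst q))"

end

theory Submission
  imports Defs
begin

lemma kTDS_mono:
  assumes "finite V" "kTDS V E k T" "T \<subseteq> T'" "T' \<subseteq> V"
  shows "kTDS V E k T'"
  unfolding kTDS_def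
proof (intro conjI ballI)
  fix x assume x: "x \<in> V"
  have "k \<le> card (nbhd V E x \<inter> T)" using assms(2) x by (simp add: kTDS_def)
  also have "\<dots> \<le> card (nbhd V E x \<inter> T')"
    by (rule card_mono) (use assms in \<open>auto simp: nbhd_def\<close>)
  finally show "k \<le> card (nbhd V E x \<inter> T')" .
qed (use assms in auto)

lemma upper_ge:
  assumes "finite V" "minimal_kTDS V E k S"
  shows "card S \<le> upper_ktdn V E k"
proof -
  have "{S. minimal_kTDS V E k S} \<subseteq> Pow V"
    by (auto simp: minimal_kTDS_def kTDS_def)
  hence "finite {S. minimal_kTDS V E k S}" using assms(1) by (meson finite_Pow_iff rev_finite_subset)
  thus ?thesis unfolding upper_ktdn_def using assms(2) by (auto intro: Max_ge)
qed

lemma prodG: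
  assumes gG: "graph VG EG" and gH: "graph VH EH"
    and ext: "Gamma_external VG EG k"
  shows "upper_ktdn VG EG k * card VH \<le> upper_ktdn (VG \<times> VH) (cart_edges EG EH) k"
proof -
  let ?V = "VG \<times> VH" and ?E = "cart_edges EG EH"
  obtain S where gs: "Gamma_set VG EG k S"
    and pn: "\<forall>v\<in>S. \<exists>v'. k_open_pn VG EG k S v v' \<and> v' \<notin> S"
    using ext unfolding Gamma_external_def by blast
  have SV: "S \<subseteq> VG" and kS: "\<forall>x\<in>VG. card (nbhd VG EG x \<inter> S) \<ge> k"
    and cS: "card S = upper_ktdn VG EG k"
    using gs by (auto simp: Gamma_set_def minimal_kTDS_def kTDS_def)
  have fG: "finite VG" and fH: "finite VH" using gG gH by (auto simp: graph_def)
  have fV: "finite ?V" using fG fH by simp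
  let ?T = "S \<times> VH"
  have kT: "kTDS ?V ?E k ?T"
    unfolding kTDS_def
  proof (intro conjI ballI)
    show "?T \<subseteq> ?V" using SV by auto
    fix p assume p: "p \<in> ?V"
    obtain g h where gh: "p = (g,h)" by force
    have "k \<le> card (nbhd VG EG g \<inter> S)" using kS p gh by auto
    also have "\<dots> = card ((\<lambda>g'. (g',h)) ` (nbhd VG EG g \<inter> S))"
      by (rule card_image[symmetric]) (auto simp: inj_on_def)
    also have "\<dots> \<le> card (nbhd ?V ?E p \<inter> ?T)"
      by (rule card_mono) (use fV p gh in \<open>auto simp: nbhd_def cart_edges_def\<close>)
    finally show "k \<le> card (nbhd ?V ?E p \<inter> ?T)" .
  qed
  have min: "minimal_kTDS ?V ?E k ?T"
    unfolding minimal_kTDS_def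
  proof (intro conjI allI impI kT notI)
    fix T assume TT: "T \<subset> ?T" and kT': "kTDS ?V ?E k T"
    then obtain v h where vh: "(v,h) \<in> ?T" "(v,h) \<notin> T" by auto
    then obtain v' where v': "k_open_pn VG EG k S v v'" "v' \<notin> S" using pn by auto
    have v'V: "v' \<in> VG" and Ev: "EG v' v" and ck: "card (nbhd VG EG v' \<inter> S) = k"
      using v' by (auto simp: k_open_pn_def nbhd_def)
    have kR: "kTDS ?V ?E k (?T - {(v,h)})"
      by (rule kTDS_mono[OF fV kT']) (use TT vh SV in auto)
    have hV: "h \<in> VH" using vh by auto
    have eq: "nbhd ?V ?E (v',h) \<inter> ?T = (\<lambda>g'. (g',h)) ` (nbhd VG EG v' \<inter> S)"
      using v'(2) SV hV by (auto simp: nbhd_def cart_edges_def)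
    have fin: "finite (nbhd ?V ?E (v',h) \<inter> ?T)" using fV by (auto simp: nbhd_def)
    have mem: "(v,h) \<in> nbhd ?V ?E (v',h) \<inter> ?T"
      using vh Ev v'V SV by (auto simp: nbhd_def cart_edges_def)
    have "card (nbhd ?V ?E (v',h) \<inter> ?T) = k"
      unfolding eq ck[symmetric] by (rule card_image) (auto simp: inj_on_def)
    moreover have "nbhd ?V ?E (v',h) \<inter> (?T - {(v,h)}) = (nbhd ?V ?E (v',h) \<inter> ?T) - {(v,h)}" by auto
    ultimately have "card (nbhd ?V ?E (v',h) \<inter> (?T - {(v,h)})) = k - 1"
      using mem fin by (simp add: card_Diff_singleton)
    moreover have "card (nbhd ?V ?E (v',h) \<inter> ?T) > 0" using mem fin card_gt_0_iff by blast
    moreover have "k \<le> card (nbhd ?V ?E (v',h) \<inter> (?T - {(v,h)}))"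
      using kR v'V hV by (auto simp: kTDS_def)
    ultimately show False using \<open>card (nbhd ?V ?E (v',h) \<inter> ?T) = k\<close> by linarith
  qed
  have "card ?T = card S * card VH" by (simp add: card_cartesian_product)
  thus ?thesis using upper_ge[OF fV min] cS by simp
qed

lemma prodH:
  assumes gG: "graph VG EG" and gH: "graph VH EH"
    and ext: "Gamma_external VH EH k"
  shows "upper_ktdn VH EH k * card VG \<le> upper_ktdn (VG \<times> VH) (cart_edges EG EH) k"
proof -
  let ?V = "VG \<times> VH" and ?E = "cart_edges EG EH"
  obtain S where gs: "Gamma_set VH EH k S"
    and pn: "\<forall>v\<in>S. \<exists>v'. k_open_pn VH EH k S v v' \<and> v' \<notin> S"
    using ext unfolding Gamma_external_def by blast
  have SV: "S \<subseteq> VH" and kS: "\<forall>x\<in>VH. card (nbhd VH EH x \<inter> S) \<ge> k"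
    and cS: "card S = upper_ktdn VH EH k"
    using gs by (auto simp: Gamma_set_def minimal_kTDS_def kTDS_def)
  have fG: "finite VG" and fH: "finite VH" using gG gH by (auto simp: graph_def)
  have fV: "finite ?V" using fG fH by simp
  let ?T = "VG \<times> S"
  have kT: "kTDS ?V ?E k ?T"
    unfolding kTDS_def
  proof (intro conjI ballI)
    show "?T \<subseteq> ?V" using SV by auto
    fix p assume p: "p \<in> ?V"
    obtain g h where gh: "p = (g,h)" by force
    have "k \<le> card (nbhd VH EH h \<inter> S)" using kS p gh by auto
    also have "\<dots> = card ((\<lambda>h'. (g,h')) ` (nbhd VH EH h \<inter> S))"
      by (rule card_image[symmetric]) (auto simp: inj_on_def)
    also have "\<dots> \<le> card (nbhd ?V ?E p \<inter> ?T)"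
      by (rule card_mono) (use fV p gh in \<open>auto simp: nbhd_def cart_edges_def\<close>)
    finally show "k \<le> card (nbhd ?V ?E p \<inter> ?T)" .
  qed
  have min: "minimal_kTDS ?V ?E k ?T"
    unfolding minimal_kTDS_def
  proof (intro conjI allI impI kT notI)
    fix T assume TT: "T \<subset> ?T" and kT': "kTDS ?V ?E k T"
    then obtain g v where vh: "(g,v) \<in> ?T" "(g,v) \<notin> T" by auto
    then obtain v' where v': "k_open_pn VH EH k S v v'" "v' \<notin> S" using pn by auto
    have v'V: "v' \<in> VH" and Ev: "EH v' v" and ck: "card (nbhd VH EH v' \<inter> S) = k"
      using v' by (auto simp: k_open_pn_def nbhd_def)
    have kR: "kTDS ?V ?E k (?T - {(g,v)})"
      by (rule kTDS_mono[OF fV kT']) (use TT vh SV in auto)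
    have gV: "g \<in> VG" using vh by auto
    have eq: "nbhd ?V ?E (g,v') \<inter> ?T = (\<lambda>h'. (g,h')) ` (nbhd VH EH v' \<inter> S)"
      using v'(2) SV gV by (auto simp: nbhd_def cart_edges_def)
    have fin: "finite (nbhd ?V ?E (g,v') \<inter> ?T)" using fV by (auto simp: nbhd_def)
    have mem: "(g,v) \<in> nbhd ?V ?E (g,v') \<inter> ?T"
      using vh Ev v'V SV by (auto simp: nbhd_def cart_edges_def)
    have "card (nbhd ?V ?E (g,v') \<inter> ?T) = k"
      unfolding eq ck[symmetric] by (rule card_image) (auto simp: inj_on_def)
    moreover have "nbhd ?V ?E (g,v') \<inter> (?T - {(g,v)}) = (nbhd ?V ?E (g,v') \<inter> ?T) - {(g,v)}" by auto
    ultimately have "card (nbhd ?V ?E (g,v') \<inter> (?T - {(g,v)})) = k - 1"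
      using mem fin by (simp add: card_Diff_singleton)
    moreover have "card (nbhd ?V ?E (g,v') \<inter> ?T) > 0" using mem fin card_gt_0_iff by blast
    moreover have "k \<le> card (nbhd ?V ?E (g,v') \<inter> (?T - {(g,v)}))"
      using kR v'V gV by (auto simp: kTDS_def)
    ultimately show False using \<open>card (nbhd ?V ?E (g,v') \<inter> ?T) = k\<close> by linarith
  qed
  have "card ?T = card VG * card S" by (simp add: card_cartesian_product)
  thus ?thesis using upper_ge[OF fV min] cS by (simp add: mult.commute)
qed

theorem mainTheorem10:
  fixes VG :: "'a set" and EG :: "'a \<Rightarrow> 'a \<Rightarrow> bool"
    and VH :: "'b set" and EH :: "'b \<Rightarrow> 'b \<Rightarrow> bool" and k :: nat
  assumes "k \<ge> 2"
    and "graph VG EG" and "graph VH EH"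
    and "min_deg_ge VG EG k" and "min_deg_ge VH EH k"
    and "Gamma_external VG EG k" and "Gamma_external VH EH k"
  shows "upper_ktdn (VG \<times> VH) (cart_edges EG EH) k \<ge>
           max (upper_ktdn VG EG k * card VH) (upper_ktdn VH EH k * card VG)"
  using prodG[OF assms(2,3,6)] prodH[OF assms(2,3,7)] by simp

end
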